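(* For every NCIFS $\Phi$ on $X\subset\mathbb R^d$, $\operatorname{HD}(J(\Phi))\le B(\Phi)$.
   Context: Fix $d\in\mathbb N$ and a compact set $X\subset\mathbb R^d$ equal to the closure of its interior, such that $\partial X$ is smooth or $X$ is convex. $\|D\phi\|:=\sup_{x\in X}|\phi'(x)|$ for a conformal map $\phi$. An NCIFS $\Phi$ on $X$ is a sequence $\Phi^{(j)}=(\phi^{(j)}_i:X\to X)_{i\in I^{(j)}}$, $j\ge1$, of families indexed by finite or countably infinite sets, satisfying: - (open set condition) images of $\operatorname{int}X$ under distinct maps of the same $\Phi^{(j)}$ are disjoint; - (conformality) there is an open connected $V\supset X$ such that all maps extend to $C^1$ conformal diffeomorphisms of $V$ into $V$; - (bounded distortion) there is $K\ge1$ with $|\phi'(x)|\le K|\phi'(y)|$ for $x,y\in V$ and every composition $\phi^{(k)}_{\omega_k}\circ\cdots\circ\phi^{(l)}_{\omega_l}$; - (uniform contraction) $\|D\phi^{(j)}_i\|\le\eta<1$ for all $i,j$. For $\omega\in I^n=\prod_{j\le n}I^{(j)}$ let $\phi_\omega=\phi^{(1)}_{\omega_1}\circ\cdots\circ\phi^{(n)}_{\omega_n}$. Define $J(\Phi)=\bigcap_n\bigcup_{\omega\in I^n}\phi_\omega(X)$, $Z_n(t)=\sum_{\omega\in I^n}\|D\phi_\omega\|^t$, $\underline P(t)=\liminf_n\frac1n\log Z_n(t)$ and $B(\Phi)=\sup\{t\ge0:\underline P(t)>0\}$ (with $\sup\emptyset=0$). $\operatorname{HD}$ is Hausdorff dimension.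 *)

theory Defs
  imports "HOL-Analysis.Analysis"
begin

text \<open>delta-approximation of the s-dimensional Hausdorff measure, via countable covers
  by bounded sets of diameter at most delta (unbounded sets have infinite diameter).\<close>
definition hausdorff_pre :: "real \<Rightarrow> real \<Rightarrow> 'a::metric_space set \<Rightarrow> ennreal" where
  "hausdorff_pre s \<delta> A =
     (INF U \<in> {U :: nat \<Rightarrow> 'a set. A \<subseteq> (\<Union>i. U i) \<and> (\<forall>i. bounded (U i) \<and> diameter (U i) \<le> \<delta>)}.
        (\<Sum>i. ennreal (diameter (U i) powr s)))"

definition hausdorff_measure :: "real \<Rightarrow> 'a::metric_space set \<Rightarrow> ennreal" where
  "hausdorff_measure s A = (SUP \<delta> \<in> {0<..}. hausdorff_pre s \<delta> A)"

definition hausdorff_dim :: "'a::metric_space set \<Rightarrow> ereal" where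
  "hausdorff_dim A = Inf (ereal ` {s::real. s \<ge> 0 \<and> hausdorff_measure s A = 0})"

fun Ck_on :: "nat \<Rightarrow> 'a::euclidean_space set \<Rightarrow> ('a \<Rightarrow> real) \<Rightarrow> bool" where
  "Ck_on 0 U g = continuous_on U g"
| "Ck_on (Suc k) U g = ((\<forall>x\<in>U. g differentiable (at x)) \<and>
      (\<forall>v. Ck_on k U (\<lambda>x. frechet_derivative g (at x) v)))"

definition smooth_on :: "'a::euclidean_space set \<Rightarrow> ('a \<Rightarrow> real) \<Rightarrow> bool" where
  "smooth_on U g = (\<forall>k. Ck_on k U g)"

definition smooth_boundary :: "'a::euclidean_space set \<Rightarrow> bool" where
  "smooth_boundary X = (\<forall>p\<in>frontier X. \<exists>U g. open U \<and> p \<in> U \<and> smooth_on U g \<and>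
      (\<forall>x\<in>U. frechet_derivative g (at x) \<noteq> (\<lambda>_. 0)) \<and>
      X \<inter> U = {x\<in>U. g x \<le> 0})"

definition conformal_C1_on :: "'a::euclidean_space set \<Rightarrow> ('a \<Rightarrow> 'a) \<Rightarrow> bool" where
  "conformal_C1_on V f = (inj_on f V \<and> f ` V \<subseteq> V \<and>
     (\<exists>D :: 'a \<Rightarrow> ('a \<Rightarrow>\<^sub>L 'a). continuous_on V D \<and>
        (\<forall>x\<in>V. (f has_derivative blinfun_apply (D x)) (at x) \<and>
                 (\<exists>c>0. \<forall>u. norm (D x u) = c * norm u))))"

text \<open>|f'(x)|: the (conformal) scaling factor of the derivative, i.e. its operator norm.\<close>
definition deriv_norm :: "('a::euclidean_space \<Rightarrow> 'a) \<Rightarrow> 'a \<Rightarrow> real" where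
  "deriv_norm f x = onorm (frechet_derivative f (at x))"

definition Dnorm :: "'a::euclidean_space set \<Rightarrow> ('a \<Rightarrow> 'a) \<Rightarrow> real" where
  "Dnorm X f = (SUP x\<in>X. deriv_norm f x)"

text \<open>phi j i is the map phi^(j)_i (j >= 1, i in I j). Index sets are subsets of nat
  (hence finite or countably infinite). cmp phi w k m = phi k (w k) o ... o phi (k+m-1) (w (k+m-1)).\<close>
fun cmp :: "(nat \<Rightarrow> nat \<Rightarrow> 'a \<Rightarrow> 'a) \<Rightarrow> (nat \<Rightarrow> nat) \<Rightarrow> nat \<Rightarrow> nat \<Rightarrow> 'a \<Rightarrow> 'a" where
  "cmp \<phi> w k 0 = id"
| "cmp \<phi> w k (Suc m) = cmp \<phi> w k m \<circ> \<phi> (k + m) (w (k + m))"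

definition words :: "(nat \<Rightarrow> nat set) \<Rightarrow> nat \<Rightarrow> (nat \<Rightarrow> nat) set" where
  "words I n = PiE {1..n} I"

definition ncifs :: "'a::euclidean_space set \<Rightarrow> (nat \<Rightarrow> nat set) \<Rightarrow> (nat \<Rightarrow> nat \<Rightarrow> 'a \<Rightarrow> 'a) \<Rightarrow> bool" where
  "ncifs X I \<phi> =
    ((\<forall>j\<ge>1. \<forall>i\<in>I j. \<phi> j i ` X \<subseteq> X) \<and>
     \<comment> \<open>open set condition\<close>
     (\<forall>j\<ge>1. \<forall>i\<in>I j. \<forall>i'\<in>I j. i \<noteq> i' \<longrightarrow> \<phi> j i ` interior X \<inter> \<phi> j i' ` interior X = {}) \<and>
     \<comment> \<open>conformality and bounded distortion\<close>
     (\<exists>V K. open V \<and> connected V \<and> X \<subseteq> V \<and>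
        (\<forall>j\<ge>1. \<forall>i\<in>I j. conformal_C1_on V (\<phi> j i)) \<and>
        K \<ge> 1 \<and>
        (\<forall>k\<ge>1. \<forall>m\<ge>1. \<forall>w. (\<forall>j\<in>{k..<k+m}. w j \<in> I j) \<longrightarrow>
           (\<forall>x\<in>V. \<forall>y\<in>V. deriv_norm (cmp \<phi> w k m) x \<le> K * deriv_norm (cmp \<phi> w k m) y))) \<and>
     \<comment> \<open>uniform contraction\<close>
     (\<exists>\<eta><1. \<forall>j\<ge>1. \<forall>i\<in>I j. Dnorm X (\<phi> j i) \<le> \<eta>))"

definition limit_set :: "'a set \<Rightarrow> (nat \<Rightarrow> nat set) \<Rightarrow> (nat \<Rightarrow> nat \<Rightarrow> 'a \<Rightarrow> 'a) \<Rightarrow> 'a set" where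
  "limit_set X I \<phi> = (\<Inter>n. \<Union>w\<in>words I n. cmp \<phi> w 1 n ` X)"

definition Zn :: "'a::euclidean_space set \<Rightarrow> (nat \<Rightarrow> nat set) \<Rightarrow> (nat \<Rightarrow> nat \<Rightarrow> 'a \<Rightarrow> 'a)
                   \<Rightarrow> nat \<Rightarrow> real \<Rightarrow> ennreal" where
  "Zn X I \<phi> n t = infsum (\<lambda>w. ennreal (Dnorm X (cmp \<phi> w 1 n) powr t)) (words I n)"

definition ln_ennreal :: "ennreal \<Rightarrow> ereal" where
  "ln_ennreal z = (if z = 0 then -\<infinity> else if z = top then \<infinity> else ereal (ln (enn2real z)))"

definition lower_pressure :: "'a::euclidean_space set \<Rightarrow> (nat \<Rightarrow> nat set) \<Rightarrow> (nat \<Rightarrow> nat \<Rightarrow> 'a \<Rightarrow> 'a)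
                   \<Rightarrow> real \<Rightarrow> ereal" where
  "lower_pressure X I \<phi> t = liminf (\<lambda>n. ln_ennreal (Zn X I \<phi> n t) / ereal (real n))"

definition bowen_param :: "'a::euclidean_space set \<Rightarrow> (nat \<Rightarrow> nat set) \<Rightarrow> (nat \<Rightarrow> nat \<Rightarrow> 'a \<Rightarrow> 'a) \<Rightarrow> ereal" where
  "bowen_param X I \<phi> =
     (let S = {t::real. t \<ge> 0 \<and> lower_pressure X I \<phi> t > 0} in
      if S = {} then 0 else Sup (ereal ` S))"

end

theory Submission
  imports Defs
begin


lemma hpre_cover:
  fixes U :: "'b \<Rightarrow> 'a::metric_space set"
  assumes A: "countable A" and J: "J \<subseteq> (\<Union>a\<in>A. U a)"
    and bd: "\<And>a. a \<in> A \<Longrightarrow> bounded (U a) \<and> diameter (U a) \<le> \<delta>" and d: "\<delta> \<ge> 0"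
  shows "hausdorff_pre s \<delta> J \<le> infsum (\<lambda>a. ennreal (diameter (U a) powr s)) A"
proof -
  define V where "V k = (if k \<in> to_nat_on A ` A then U (from_nat_into A k) else {})" for k
  define g where "g k = ennreal (diameter (V k) powr s)" for k
  have cov: "J \<subseteq> (\<Union>k. V k)"
  proof
    fix x assume "x \<in> J"
    then obtain a where a: "a \<in> A" "x \<in> U a" using J by blast
    then have "V (to_nat_on A a) = U a" using A by (simp add: V_def)
    then show "x \<in> (\<Union>k. V k)" using a by blast
  qed
  have vb: "bounded (V k) \<and> diameter (V k) \<le> \<delta>" for k
    using bd[of "from_nat_into A k"] d A by (auto simp: V_def)
  have "hausdorff_pre s \<delta> J \<le> (\<Sum>k. g k)"
    unfolding hausdorff_pre_def g_def by (rule INF_lower) (use cov vb in auto)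
  also have "(\<Sum>k. g k) = (SUP n. \<Sum>k<n. g k)" by (simp add: suminf_eq_SUP)
  also have "\<dots> \<le> infsum g UNIV"
  proof (rule SUP_least)
    fix n
    have "infsum g UNIV = (SUP F\<in>{F. finite F \<and> F\<subseteq>UNIV}. sum g F)"
      by (rule nonneg_infsum_complete) simp
    also have "sum g {..<n} \<le> \<dots>" by (rule SUP_upper) auto
    finally show "sum g {..<n} \<le> infsum g UNIV" .
  qed
  also have "infsum g UNIV = infsum g (to_nat_on A ` A)"
    by (rule infsum_cong_neutral) (auto simp: g_def V_def)
  also have "\<dots> = infsum (g \<circ> to_nat_on A) A"
    using A by (intro infsum_reindex) auto
  also have "\<dots> = infsum (\<lambda>a. ennreal (diameter (U a) powr s)) A"
    using A by (intro infsum_cong) (auto simp: g_def V_def)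
  finally show ?thesis .
qed



lemma conf_diff:
  assumes "conformal_C1_on V f" "x \<in> V"
  shows "f differentiable (at x)" "f x \<in> V"
  using assms unfolding conformal_C1_on_def differentiable_def by blast+

lemma deriv_norm_nonneg:
  assumes "f differentiable (at x)" shows "0 \<le> deriv_norm f x"
  unfolding deriv_norm_def
  using assms frechet_derivative_works has_derivative_bounded_linear onorm_pos_le by blast

lemma deriv_norm_comp:
  assumes "g differentiable (at x)" "f differentiable (at (g x))"
  shows "deriv_norm (f \<circ> g) x \<le> deriv_norm f (g x) * deriv_norm g x"
  unfolding deriv_norm_def frechet_derivative_compose[OF assms]
  by (rule onorm_compose) (use assms frechet_derivative_works has_derivative_bounded_linear in blast)+

lemma cmp_props:
  assumes conf: "\<And>j i. j \<ge> 1 \<Longrightarrow> i \<in> I j \<Longrightarrow> conformal_C1_on V (\<phi> j i)"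
    and k: "k \<ge> 1" and w: "\<forall>j\<in>{k..<k+m}. w j \<in> I j" and x: "x \<in> V"
  shows "cmp \<phi> w k m differentiable (at x) \<and> cmp \<phi> w k m x \<in> V"
  using w x
proof (induction m arbitrary: x)
  case 0
  then show ?case by simp
next
  case (Suc m)
  have c: "conformal_C1_on V (\<phi> (k+m) (w (k+m)))" using conf k Suc.prems(1) by auto
  have IH: "cmp \<phi> w k m differentiable (at y) \<and> cmp \<phi> w k m y \<in> V" if "y \<in> V" for y
    using Suc.IH[OF _ that] Suc.prems(1) by auto
  show ?case
    using conf_diff[OF c Suc.prems(2)] IH[of "\<phi> (k+m) (w (k+m)) x"]
    using differentiable_chain_at[of "\<phi> (k+m) (w (k+m))" x "cmp \<phi> w k m"]
    by (simp del: o_apply) simp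
qed

lemma cmp_X:
  assumes "\<And>j i. j \<ge> 1 \<Longrightarrow> i \<in> I j \<Longrightarrow> \<phi> j i ` X \<subseteq> X"
    and k: "k \<ge> 1" and w: "\<forall>j\<in>{k..<k+m}. w j \<in> I j" and x: "x \<in> X"
  shows "cmp \<phi> w k m x \<in> X"
  using w x
proof (induction m arbitrary: x)
  case 0 then show ?case by simp
next
  case (Suc m)
  have "\<phi> (k+m) (w (k+m)) x \<in> X" using assms(1)[of "k+m" "w (k+m)"] k Suc.prems by auto
  then show ?case using Suc by auto
qed



lemma infsum_prod_le:
  fixes h :: "'b \<Rightarrow> ennreal"
  assumes F: "finite F"
  shows "infsum (\<lambda>p. c * h (fst p)) (A \<times> F) \<le> of_nat (card F) * c * infsum h A"
proof -
  have "infsum (\<lambda>p. c * h (fst p)) (A \<times> F) = (SUP G\<in>{G. finite G \<and> G \<subseteq> A \<times> F}. sum (\<lambda>p. c * h (fst p)) G)"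
    by (rule nonneg_infsum_complete) simp
  also have "\<dots> \<le> of_nat (card F) * c * infsum h A"
  proof (rule SUP_least)
    fix G assume G: "G \<in> {G. finite G \<and> G \<subseteq> A \<times> F}"
    have fG: "finite (fst ` G)" using G by auto
    have "sum (\<lambda>p. c * h (fst p)) G \<le> sum (\<lambda>p. c * h (fst p)) (fst ` G \<times> F)"
      by (rule sum_mono2) (use G F fG in force)+
    also have "\<dots> = (\<Sum>a\<in>fst ` G. \<Sum>b\<in>F. c * h a)"
      by (simp only: sum.cartesian_product split_def)
    also have "\<dots> = of_nat (card F) * c * sum h (fst ` G)"
      by (simp add: sum_distrib_left mult.assoc)
    also have "sum h (fst ` G) \<le> infsum h A"
    proof -
      have "infsum h A = (SUP G\<in>{G. finite G \<and> G \<subseteq> A}. sum h G)"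
        by (rule nonneg_infsum_complete) simp
      moreover have "sum h (fst ` G) \<le> (SUP G\<in>{G. finite G \<and> G \<subseteq> A}. sum h G)"
        by (rule SUP_upper) (use G fG in auto)
      ultimately show ?thesis by simp
    qed
    hence "of_nat (card F) * c * sum h (fst ` G) \<le> of_nat (card F) * c * infsum h A"
      by (rule mult_left_mono) simp
    finally show "sum (\<lambda>p. c * h (fst p)) G \<le> of_nat (card F) * c * infsum h A" .
  qed
  finally show ?thesis .
qed

lemma ln_bound:
  assumes n: "n \<ge> 1" and lt: "ln_ennreal Z / ereal (real n) < ereal \<epsilon>"
  shows "Z \<le> ennreal (exp \<epsilon> ^ n)"
proof (cases "Z = 0")
  case True then show ?thesis by simp
next
  case False
  show ?thesis
  proof (cases "Z = top")
    case True
    then show ?thesis using lt n False by (simp add: ln_ennreal_def)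
  next
    case nt: False
    then obtain z where z: "Z = ennreal z" "z \<ge> 0" by (cases Z) auto
    with False have zp: "z > 0" by auto
    have "ln_ennreal Z = ereal (ln z)" using False nt z by (simp add: ln_ennreal_def)
    with lt n have "ln z / real n < \<epsilon>" by simp
    with n have "ln z < real n * \<epsilon>" by (simp add: divide_less_eq mult.commute)
    hence "z < exp (real n * \<epsilon>)" using zp by (metis exp_less_cancel_iff exp_ln)
    hence "z \<le> exp \<epsilon> ^ n" by (simp add: exp_of_nat_mult)
    then show ?thesis using z by (simp add: ennreal_leI)
  qed
qed

lemma Dnorm_ge:
  assumes "\<forall>x\<in>X. \<forall>y\<in>X. deriv_norm f x \<le> K * deriv_norm f y" "x \<in> X"
  shows "deriv_norm f x \<le> Dnorm X f"
  unfolding Dnorm_def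
proof (rule cSUP_upper[OF assms(2)])
  show "bdd_above (deriv_norm f ` X)" using assms by (auto intro!: bdd_aboveI2)
qed

lemma cmp_one: "cmp \<phi> w k 1 = \<phi> k (w k)"
  using cmp.simps(2)[of \<phi> w k 0] by simp

lemma contraction:
  assumes inv: "\<And>j i. j \<ge> 1 \<Longrightarrow> i \<in> I j \<Longrightarrow> \<phi> j i ` X \<subseteq> X"
    and conf: "\<And>j i. j \<ge> 1 \<Longrightarrow> i \<in> I j \<Longrightarrow> conformal_C1_on V (\<phi> j i)"
    and XV: "X \<subseteq> V"
    and single: "\<And>j i x. j \<ge> 1 \<Longrightarrow> i \<in> I j \<Longrightarrow> x \<in> X \<Longrightarrow> deriv_norm (\<phi> j i) x \<le> \<eta>"
    and k: "k \<ge> 1" and w: "\<forall>j\<in>{k..<k+m}. w j \<in> I j" and x: "x \<in> X"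
  shows "deriv_norm (cmp \<phi> w k m) x \<le> \<eta> ^ m"
  using w x
proof (induction m arbitrary: x)
  case 0
  have "frechet_derivative (cmp \<phi> w k 0) (at x) = (\<lambda>y. y)"
    using frechet_derivative_at[OF has_derivative_ident, of x] by (simp add: id_def)
  then show ?case unfolding deriv_norm_def using onorm_id_le by (metis power_0)
next
  case (Suc m)
  let ?g = "\<phi> (k+m) (w (k+m))"
  have wi: "w (k+m) \<in> I (k+m)" using Suc.prems(1) by auto
  have c: "conformal_C1_on V ?g" using conf k wi by auto
  have gx: "?g x \<in> X" using inv[of "k+m" "w (k+m)"] k wi Suc.prems(2) by auto
  have w': "\<forall>j\<in>{k..<k+m}. w j \<in> I j" using Suc.prems(1) by auto
  have d1: "?g differentiable (at x)" using conf_diff[OF c] Suc.prems(2) XV by auto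
  have d2: "cmp \<phi> w k m differentiable (at (?g x))"
    using cmp_props[OF conf k w'] gx XV by auto
  have "deriv_norm (cmp \<phi> w k (Suc m)) x \<le> deriv_norm (cmp \<phi> w k m) (?g x) * deriv_norm ?g x"
    using deriv_norm_comp[OF d1 d2] by simp
  also have "\<dots> \<le> \<eta> ^ m * \<eta>"
    using Suc.IH[OF w' gx] single[OF _ wi Suc.prems(2)] k deriv_norm_nonneg[OF d1] deriv_norm_nonneg[OF d2]
    by (intro mult_mono) auto
  finally show ?case by (simp add: mult.commute del: o_apply)
qed




lemma ball_cover_diam:
  fixes f :: "'a::euclidean_space \<Rightarrow> 'a"
  assumes d: "\<And>y. y \<in> cball c e \<Longrightarrow> f differentiable (at y)"
    and b: "\<And>y. y \<in> cball c e \<Longrightarrow> deriv_norm f y \<le> L"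
    and S: "S \<subseteq> cball c e" and L: "L \<ge> 0" and e: "e \<ge> 0"
  shows "bounded (f ` S) \<and> diameter (f ` S) \<le> 2 * e * L"
proof -
  have lip: "norm (f y - f z) \<le> L * norm (y - z)" if "y \<in> cball c e" "z \<in> cball c e" for y z
  proof (rule differentiable_bound[where f'="\<lambda>x. frechet_derivative f (at x)"])
    show "convex (cball c e)" by simp
    show "(f has_derivative frechet_derivative f (at x)) (at x within cball c e)" if "x \<in> cball c e" for x
      using d[OF that] frechet_derivative_works has_derivative_at_withinI by blast
    show "onorm (frechet_derivative f (at x)) \<le> L" if "x \<in> cball c e" for x
      using b[OF that] by (simp add: deriv_norm_def)
  qed (use that in auto)
  have c: "c \<in> cball c e" using e by simp
  have "f ` S \<subseteq> cball (f c) (L * e)"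
  proof
    fix u assume "u \<in> f ` S"
    then obtain y where y: "y \<in> S" "u = f y" by auto
    have "norm (f c - f y) \<le> L * norm (c - y)" using lip[OF c] y S by auto
    also have "\<dots> \<le> L * e" using y S L by (intro mult_left_mono) (auto simp: dist_norm)
    finally show "u \<in> cball (f c) (L * e)" using y by (simp add: dist_norm)
  qed
  hence bd: "bounded (f ` S)" using bounded_cball bounded_subset by blast
  have "diameter (f ` S) \<le> 2 * e * L"
  proof (rule diameter_le)
    show "f ` S \<noteq> {} \<or> 0 \<le> 2 * e * L" using L e by simp
    fix u v assume "u \<in> f ` S" "v \<in> f ` S"
    then obtain y z where yz: "y \<in> S" "z \<in> S" "u = f y" "v = f z" by auto
    have l1: "norm (f y - f z) \<le> L * norm (y - z)" using lip yz(1,2) S by blast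
    have "norm (y - z) \<le> 2 * e"
    proof -
      have "norm (y - z) \<le> norm (y - c) + norm (c - z)" by (rule norm_diff_triangle_le[of _ c]) simp_all
      also have "\<dots> \<le> 2 * e"
      proof -
        have "dist c y \<le> e" "dist c z \<le> e" using yz(1,2) S by auto
        thus ?thesis by (simp add: dist_norm norm_minus_commute)
      qed
      finally show ?thesis .
    qed
    hence "L * norm (y - z) \<le> L * (2 * e)" using L by (rule mult_left_mono)
    with l1 show "norm (u - v) \<le> 2 * e * L" using yz by (simp add: algebra_simps)
  qed
  with bd show ?thesis by simp
qed




lemma key:
  fixes X :: "'a::euclidean_space set" and \<phi> :: "nat \<Rightarrow> nat \<Rightarrow> 'a \<Rightarrow> 'a"
  assumes cX: "compact X"
    and inv: "\<And>j i. j \<ge> 1 \<Longrightarrow> i \<in> I j \<Longrightarrow> \<phi> j i ` X \<subseteq> X"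
    and oV: "open V" and XV: "X \<subseteq> V"
    and conf: "\<And>j i. j \<ge> 1 \<Longrightarrow> i \<in> I j \<Longrightarrow> conformal_C1_on V (\<phi> j i)"
    and K: "K \<ge> 1"
    and dis: "\<And>k m w. k \<ge> 1 \<Longrightarrow> m \<ge> 1 \<Longrightarrow> \<forall>j\<in>{k..<k+m}. w j \<in> I j \<Longrightarrow>
         \<forall>x\<in>V. \<forall>y\<in>V. deriv_norm (cmp \<phi> w k m) x \<le> K * deriv_norm (cmp \<phi> w k m) y"
    and eta1: "\<eta> < 1" and eta: "\<And>j i. j \<ge> 1 \<Longrightarrow> i \<in> I j \<Longrightarrow> Dnorm X (\<phi> j i) \<le> \<eta>"
    and t0: "t \<ge> 0" and ts: "t < s" and P: "lower_pressure X I \<phi> t \<le> 0"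
  shows "hausdorff_measure s (limit_set X I \<phi>) = 0"
proof -
  define J where "J = limit_set X I \<phi>"
  have pre0: "hausdorff_pre s \<delta> J = 0" if \<delta>: "\<delta> > 0" for \<delta>
  proof (cases "X = {}")
    case True
    then have "J = {}" by (simp add: J_def limit_set_def)
    then have "hausdorff_pre s \<delta> J \<le> infsum (\<lambda>a. ennreal (diameter ((\<lambda>_. {}) a) powr s)) ({}::nat set)"
      using \<delta> hpre_cover[of "{}::nat set" J "\<lambda>_::nat. {}" \<delta> s] by simp
    then show ?thesis by simp
  next
    case Xne: False
    then obtain x0 where x0: "x0 \<in> X" by blast
    define \<eta>' where "\<eta>' = max \<eta> (1/2)"
    have e'0: "0 < \<eta>'" and e'1: "\<eta>' < 1" using eta1 by (auto simp: \<eta>'_def)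
    have single: "deriv_norm (\<phi> j i) x \<le> \<eta>'" if "j \<ge> 1" "i \<in> I j" "x \<in> X" for j i x
    proof -
      have "\<forall>x\<in>V. \<forall>y\<in>V. deriv_norm (\<phi> j i) x \<le> K * deriv_norm (\<phi> j i) y"
        using dis[of j 1 "\<lambda>_. i"] that by (simp add: cmp_one)
      then have "deriv_norm (\<phi> j i) x \<le> Dnorm X (\<phi> j i)"
        using XV that by (intro Dnorm_ge[where K=K]) auto
      then show ?thesis using eta[OF that(1,2)] by (simp add: \<eta>'_def)
    qed
    obtain e0 where e0: "e0 > 0" "(\<Union>x\<in>X. cball x e0) \<subseteq> V"
      using compact_subset_open_imp_cball_epsilon_subset[OF cX oV XV] by blast
    obtain F where F: "F \<subseteq> X" "finite F" "X \<subseteq> (\<Union>c\<in>F. ball c e0)"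
      using compactE_image[OF cX, of X "\<lambda>c. ball c e0"] e0(1) by force
    define C where "C = 2 * e0 * K"
    have C0: "C > 0" using e0 K by (simp add: C_def)
    define q where "q = \<eta>' powr (s - t)"
    have q0: "q > 0" using e'0 by (simp add: q_def)
    have q1: "q < 1"
    proof -
      have "q = exp ((s - t) * ln \<eta>')" using e'0 by (simp add: q_def powr_def)
      moreover have "ln \<eta>' < 0" using e'0 e'1 by simp
      ultimately show ?thesis using ts by (simp add: mult_pos_neg)
    qed
    define r0 where "r0 = sqrt q"
    have r00: "r0 > 0" and r01: "r0 < 1" using q0 q1 by (auto simp: r0_def)
    have qr: "q = r0 * r0" using q0 by (simp add: r0_def)
    have qlr: "q < r0" using r00 r01 qr by (simp add: mult_less_cancel_left1)
    define \<epsilon> where "\<epsilon> = ln (r0 / q)"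
    have eps0: "\<epsilon> > 0" using qlr q0 by (simp add: \<epsilon>_def)
    have expe: "exp \<epsilon> = r0 / q" using q0 r00 by (simp add: \<epsilon>_def)
    have le_e: "hausdorff_pre s \<delta> J \<le> ennreal e" if e: "e > 0" for e
    proof -
      define M where "M = real (card F) * C powr s"
      have M0: "M \<ge> 0" by (simp add: M_def)
      have freq: "frequently (\<lambda>n. ln_ennreal (Zn X I \<phi> n t) / ereal (real n) < ereal \<epsilon>) sequentially"
      proof (rule ccontr)
        assume "\<not> ?thesis"
        then have "eventually (\<lambda>n. ereal \<epsilon> \<le> ln_ennreal (Zn X I \<phi> n t) / ereal (real n)) sequentially"
          by (simp add: not_frequently not_less)
        then have "ereal \<epsilon> \<le> lower_pressure X I \<phi> t"
          unfolding lower_pressure_def by (rule Liminf_bounded)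
        then have "ereal \<epsilon> \<le> 0" using P by (rule order_trans)
        with eps0 show False by simp
      qed
      have ev1: "eventually (\<lambda>n. \<eta>' ^ n < \<delta> / C) sequentially"
        using e'0 e'1 \<delta> C0 by (intro order_tendstoD(2)[OF LIMSEQ_power_zero]) auto
      have ev2: "eventually (\<lambda>n. r0 ^ n < e / (M + 1)) sequentially"
        using r00 r01 e M0 by (intro order_tendstoD(2)[OF LIMSEQ_power_zero]) auto
      have ev3: "eventually (\<lambda>n. n \<ge> 1) sequentially" by (rule eventually_ge_at_top)
      obtain n where n1: "n \<ge> 1" and nd: "\<eta>' ^ n < \<delta> / C" and ne: "r0 ^ n < e / (M + 1)"
        and nZ: "ln_ennreal (Zn X I \<phi> n t) / ereal (real n) < ereal \<epsilon>"
        using frequently_ex[OF frequently_eventually_frequently[OF freq eventually_conj[OF ev1 eventually_conj[OF ev2 ev3]]]]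
        by blast
      define W where "W = words I n"
      define U where "U p = cmp \<phi> (fst p) 1 n ` (X \<inter> cball (snd p) e0)" for p
      define D where "D \<omega> = Dnorm X (cmp \<phi> \<omega> 1 n)" for \<omega>
      have wfacts: "bounded (U p) \<and> diameter (U p) \<le> \<delta> \<and>
          ennreal (diameter (U p) powr s) \<le> ennreal (C powr s * q ^ n) * ennreal (D (fst p) powr t)"
        if p: "p \<in> W \<times> F" for p
      proof -
        obtain \<omega> c where pc: "p = (\<omega>, c)" "\<omega> \<in> W" "c \<in> F" using p by auto
        let ?f = "cmp \<phi> \<omega> 1 n"
        have wj: "\<forall>j\<in>{1..<1+n}. \<omega> j \<in> I j" using pc(2) by (auto simp: W_def words_def PiE_iff)
        have diffV: "?f differentiable (at y) \<and> ?f y \<in> V" if "y \<in> V" for y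
          using cmp_props[OF conf _ wj that] by auto
        have distV: "\<forall>x\<in>V. \<forall>y\<in>V. deriv_norm ?f x \<le> K * deriv_norm ?f y"
          using dis[OF _ n1 wj] by simp
        have hX: "deriv_norm ?f x \<le> D \<omega>" if "x \<in> X" for x
          unfolding D_def using distV XV that by (intro Dnorm_ge[where K=K]) auto
        have Dle: "D \<omega> \<le> \<eta>' ^ n"
          unfolding D_def Dnorm_def
        proof (rule cSUP_least[OF Xne])
          fix x assume "x \<in> X"
          then show "deriv_norm ?f x \<le> \<eta>' ^ n"
            using contraction[OF inv conf XV single _ wj] by simp
        qed
        have Dnn: "0 \<le> D \<omega>" using hX[OF x0] deriv_norm_nonneg diffV x0 XV by force
        have bV: "deriv_norm ?f y \<le> K * D \<omega>" if "y \<in> V" for y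
        proof -
          have "deriv_norm ?f y \<le> K * deriv_norm ?f x0" using distV that x0 XV by auto
          also have "\<dots> \<le> K * D \<omega>" using hX[OF x0] K by simp
          finally show ?thesis .
        qed
        have cX': "c \<in> X" using pc F by auto
        have cV: "cball c e0 \<subseteq> V" using e0(2) cX' by auto
        have bd: "bounded (U p) \<and> diameter (U p) \<le> 2 * e0 * (K * D \<omega>)"
          unfolding U_def pc fst_conv snd_conv
        proof (rule ball_cover_diam)
          show "?f differentiable (at y)" if "y \<in> cball c e0" for y using diffV cV that by blast
          show "deriv_norm ?f y \<le> K * D \<omega>" if "y \<in> cball c e0" for y using bV cV that by blast
        qed (use e0(1) K Dnn in auto)
        have dC: "diameter (U p) \<le> C * D \<omega>" using bd by (simp add: C_def algebra_simps)
        have "C * D \<omega> \<le> C * \<eta>' ^ n" using Dle C0 by simp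
        also have "\<dots> \<le> \<delta>" using nd C0 by (simp add: field_simps)
        finally have dd: "diameter (U p) \<le> \<delta>" using dC by linarith
        have d0: "0 \<le> diameter (U p)" using bd diameter_ge_0 by blast
        have "diameter (U p) powr s \<le> (C * D \<omega>) powr s"
          using d0 dC t0 ts by (intro powr_mono2) auto
        also have "\<dots> = C powr s * D \<omega> powr s" using C0 Dnn by (simp add: powr_mult)
        also have "D \<omega> powr s \<le> D \<omega> powr t * q ^ n"
        proof (cases "D \<omega> = 0")
          case True then show ?thesis by simp
        next
          case False
          then have Dp: "D \<omega> > 0" using Dnn by simp
          have "D \<omega> powr s = D \<omega> powr t * D \<omega> powr (s - t)"
            by (simp add: powr_add[symmetric])
          also have "D \<omega> powr (s - t) \<le> (\<eta>' ^ n) powr (s - t)"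
            using Dle Dnn ts by (intro powr_mono2) auto
          also have "(\<eta>' ^ n) powr (s - t) = q ^ n"
          proof -
            have "(\<eta>' ^ n) powr (s - t) = (\<eta>' powr real n) powr (s - t)"
              using e'0 by (simp add: powr_realpow)
            also have "\<dots> = (\<eta>' powr (s - t)) powr real n" by (simp add: powr_powr mult.commute)
            also have "\<dots> = q ^ n" using q0 by (simp add: q_def powr_realpow)
            finally show ?thesis .
          qed
          finally show ?thesis using Dp by (simp add: mult_left_mono)
        qed
        hence "C powr s * D \<omega> powr s \<le> C powr s * (D \<omega> powr t * q ^ n)"
          by (rule mult_left_mono) simp
        finally have "diameter (U p) powr s \<le> (C powr s * q ^ n) * D \<omega> powr t"
          by (simp add: algebra_simps)
        hence "ennreal (diameter (U p) powr s) \<le> ennreal ((C powr s * q ^ n) * D \<omega> powr t)"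
          by (rule ennreal_leI)
        also have "\<dots> = ennreal (C powr s * q ^ n) * ennreal (D \<omega> powr t)"
          using q0 by (intro ennreal_mult) auto
        finally show ?thesis using bd dd pc by simp
      qed
      have cntW: "countable W" unfolding W_def words_def
        by (rule countable_PiE) auto
      have cov: "J \<subseteq> (\<Union>p\<in>W \<times> F. U p)"
      proof
        fix x assume "x \<in> J"
        then have "x \<in> (\<Union>w\<in>words I n. cmp \<phi> w 1 n ` X)" by (simp add: J_def limit_set_def)
        then obtain \<omega> y where wy: "\<omega> \<in> W" "y \<in> X" "x = cmp \<phi> \<omega> 1 n y" by (auto simp: W_def)
        then obtain c where c: "c \<in> F" "y \<in> ball c e0" using F by blast
        then have "x \<in> U (\<omega>, c)" using wy by (auto simp: U_def)
        then show "x \<in> (\<Union>p\<in>W \<times> F. U p)" using wy c by blast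
      qed
      have "hausdorff_pre s \<delta> J \<le> infsum (\<lambda>p. ennreal (diameter (U p) powr s)) (W \<times> F)"
        using cntW F(2) \<delta> wfacts by (intro hpre_cover[OF _ cov]) (auto intro: countable_SIGMA countable_finite)
      also have "\<dots> \<le> infsum (\<lambda>p. ennreal (C powr s * q ^ n) * ennreal (D (fst p) powr t)) (W \<times> F)"
        using wfacts by (intro infsum_mono nonneg_summable_on_complete) auto
      also have "\<dots> \<le> of_nat (card F) * ennreal (C powr s * q ^ n) * infsum (\<lambda>\<omega>. ennreal (D \<omega> powr t)) W"
        by (rule infsum_prod_le[OF F(2)])
      also have "infsum (\<lambda>\<omega>. ennreal (D \<omega> powr t)) W = Zn X I \<phi> n t"
        by (simp add: Zn_def D_def W_def)
      also have "\<dots> \<le> ennreal (exp \<epsilon> ^ n)" by (rule ln_bound[OF n1 nZ])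
      finally have "hausdorff_pre s \<delta> J \<le> of_nat (card F) * ennreal (C powr s * q ^ n) * ennreal (exp \<epsilon> ^ n)"
        by (simp add: mult_left_mono)
      also have "\<dots> = ennreal (M * r0 ^ n)"
      proof -
        have "q ^ n * (r0 / q) ^ n = r0 ^ n" using q0 by (simp add: power_mult_distrib[symmetric])
        hence "real (card F) * (C powr s * q ^ n) * exp \<epsilon> ^ n = M * r0 ^ n"
          by (simp add: M_def expe algebra_simps)
        moreover have "of_nat (card F) * ennreal (C powr s * q ^ n) * ennreal (exp \<epsilon> ^ n)
            = ennreal (real (card F) * (C powr s * q ^ n) * exp \<epsilon> ^ n)"
          using q0 by (simp add: ennreal_mult ennreal_of_nat_eq_real_of_nat)
        ultimately show ?thesis by simp
      qed
      also have "\<dots> \<le> ennreal e"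
      proof (rule ennreal_leI)
        have "M * r0 ^ n \<le> (M + 1) * r0 ^ n" using r00 by (simp add: mult_right_mono)
        also have "\<dots> < (M + 1) * (e / (M + 1))" using ne M0 by (intro mult_strict_left_mono) auto
        also have "\<dots> = e" using M0 by simp
        finally show "M * r0 ^ n \<le> e" by simp
      qed
      finally show ?thesis .
    qed
    show ?thesis
      by (rule antisym[OF ennreal_le_epsilon]) (use le_e in auto)
  qed
  show ?thesis unfolding hausdorff_measure_def J_def[symmetric]
    using pre0 by simp
qed




theorem lemma2p8:
  fixes X :: "'a::euclidean_space set"
    and I :: "nat \<Rightarrow> nat set"
    and \<phi> :: "nat \<Rightarrow> nat \<Rightarrow> 'a \<Rightarrow> 'a"
  assumes "compact X"
    and "X = closure (interior X)"
    and "smooth_boundary X \<or> convex X"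
    and "ncifs X I \<phi>"
  shows "hausdorff_dim (limit_set X I \<phi>) \<le> bowen_param X I \<phi>"
proof -
  have inv: "\<And>j i. j \<ge> 1 \<Longrightarrow> i \<in> I j \<Longrightarrow> \<phi> j i ` X \<subseteq> X"
    using assms(4) unfolding ncifs_def by (elim conjE) auto
  have exVK: "\<exists>V K. open V \<and> connected V \<and> X \<subseteq> V \<and>
        (\<forall>j\<ge>1. \<forall>i\<in>I j. conformal_C1_on V (\<phi> j i)) \<and>
        K \<ge> 1 \<and>
        (\<forall>k\<ge>1. \<forall>m\<ge>1. \<forall>w. (\<forall>j\<in>{k..<k+m}. w j \<in> I j) \<longrightarrow>
           (\<forall>x\<in>V. \<forall>y\<in>V. deriv_norm (cmp \<phi> w k m) x \<le> K * deriv_norm (cmp \<phi> w k m) y))"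
    using assms(4) unfolding ncifs_def by (elim conjE) assumption
  obtain V K where VK: "open V \<and> connected V \<and> X \<subseteq> V \<and>
        (\<forall>j\<ge>1. \<forall>i\<in>I j. conformal_C1_on V (\<phi> j i)) \<and>
        K \<ge> 1 \<and>
        (\<forall>k\<ge>1. \<forall>m\<ge>1. \<forall>w. (\<forall>j\<in>{k..<k+m}. w j \<in> I j) \<longrightarrow>
           (\<forall>x\<in>V. \<forall>y\<in>V. deriv_norm (cmp \<phi> w k m) x \<le> K * deriv_norm (cmp \<phi> w k m) y))"
    using exVK by blast
  have oV: "open V" and XV: "X \<subseteq> V" and K: "K \<ge> 1" using VK by auto
  have conf: "\<And>j i. j \<ge> 1 \<Longrightarrow> i \<in> I j \<Longrightarrow> conformal_C1_on V (\<phi> j i)" using VK by auto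
  have dis: "\<And>k m w. k \<ge> 1 \<Longrightarrow> m \<ge> 1 \<Longrightarrow> \<forall>j\<in>{k..<k+m}. w j \<in> I j \<Longrightarrow>
         \<forall>x\<in>V. \<forall>y\<in>V. deriv_norm (cmp \<phi> w k m) x \<le> K * deriv_norm (cmp \<phi> w k m) y"
    using VK by blast
  have exeta: "\<exists>\<eta><1. \<forall>j\<ge>1. \<forall>i\<in>I j. Dnorm X (\<phi> j i) \<le> \<eta>"
    using assms(4) unfolding ncifs_def by (elim conjE) assumption
  obtain \<eta> where eta0: "\<eta> < 1 \<and> (\<forall>j\<ge>1. \<forall>i\<in>I j. Dnorm X (\<phi> j i) \<le> \<eta>)"
    using exeta by blast
  have eta1: "\<eta> < 1" and eta: "\<And>j i. j \<ge> 1 \<Longrightarrow> i \<in> I j \<Longrightarrow> Dnorm X (\<phi> j i) \<le> \<eta>"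
    using eta0 by auto
  define S where "S = {t::real. t \<ge> 0 \<and> lower_pressure X I \<phi> t > 0}"
  define b where "b = bowen_param X I \<phi>"
  have b_eq: "b = (if S = {} then 0 else Sup (ereal ` S))"
    unfolding b_def bowen_param_def S_def Let_def by (rule refl)
  have b0: "b \<ge> 0"
  proof (cases "S = {}")
    case False
    then obtain t where "t \<in> S" by blast
    then have "ereal t \<le> Sup (ereal ` S)" "t \<ge> 0" by (auto intro: Sup_upper simp: S_def)
    then show ?thesis using False b_eq by (metis ereal_less_eq(5) order_trans)
  qed (simp add: b_eq)
  have hm0: "hausdorff_measure s (limit_set X I \<phi>) = 0" if st: "ereal s > b" "s \<ge> 0" for s
  proof -
    obtain r where r: "b = ereal r" using st b0 by (cases b) auto
    define t where "t = (r + s) / 2"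
    have rs: "r < s" using st r by simp
    have t0: "t \<ge> 0" using b0 r rs by (simp add: t_def)
    have ts: "t < s" using rs by (simp add: t_def)
    have bt: "b < ereal t" using r rs by (simp add: t_def)
    have "t \<notin> S"
    proof
      assume "t \<in> S"
      then have "ereal t \<le> Sup (ereal ` S)" by (auto intro: Sup_upper)
      moreover have "b = Sup (ereal ` S)" using \<open>t \<in> S\<close> b_eq by auto
      ultimately show False using bt by simp
    qed
    then have P: "lower_pressure X I \<phi> t \<le> 0" using t0 by (auto simp: S_def not_less)
    show ?thesis
      by (rule key[OF assms(1) inv oV XV conf K dis eta1 eta t0 ts P])
  qed
  show ?thesis
  proof (cases b)
    case PInf then show ?thesis by (simp add: b_def)
  next
    case MInf then show ?thesis using b0 by simp
  next
    case (real r)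
    have "hausdorff_dim (limit_set X I \<phi>) \<le> ereal r"
    proof (rule ereal_le_epsilon2)
      fix e :: real assume e: "0 < e"
      have r0: "r \<ge> 0" using b0 real by simp
      have "hausdorff_measure (r + e) (limit_set X I \<phi>) = 0"
        using hm0[of "r + e"] real e r0 by simp
      then have "ereal (r + e) \<in> ereal ` {s::real. s \<ge> 0 \<and> hausdorff_measure s (limit_set X I \<phi>) = 0}"
        using r0 e by auto
      then have "hausdorff_dim (limit_set X I \<phi>) \<le> ereal (r + e)"
        unfolding hausdorff_dim_def by (rule Inf_lower)
      then show "hausdorff_dim (limit_set X I \<phi>) \<le> ereal r + ereal e" by simp
    qed
    then show ?thesis using real by (simp add: b_def)
  qed
qed


end
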